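(* For every $f$ in the Bergman space $\mathfrak{B}^1$ and every finite positive Borel measure $\mu$ on $\mathbb{D}$, one has, for $0<h<1/2$ and $t>0$, $$\mu\big(\{z\in\mathbb{D}:|z|>1-h\text{ and }|f(z)|>t\}\big)\le4\,K_{\mu,2}(2h)\,\mathcal{A}(\{\Lambda_f>t\}).$$
   Context: $\mathbb{D}$ is the open unit disk, $\mathbb{T}$ the unit circle, $\mathcal{A}$ the normalized area measure $dx\,dy/\pi$; $\mathfrak{B}^1$ is the space of analytic functions in $L^1(\mathbb{D},\mathcal{A})$. For $\xi\in\mathbb{T}$, $0<h\le1$: $W(\xi,h)=\{z\in\mathbb{D}:|z|\ge1-h,\ |\arg(z\bar\xi)|\le\pi h\}$, $\rho_\mu(h)=\sup_{\xi\in\mathbb{T}}\mu(W(\xi,h))$, $K_{\mu,2}(h)=\sup_{0<t<h}\rho_\mu(t)/t^2$. Hastings–Luecking sets: for $k=2^n+j-1$, $n\ge0$, $0\le j\le2^n-1$, $\Delta_k=\{z\in\mathbb{D}:1-2^{-n}\le|z|<1-2^{-n-1},\ (2j-1)\pi/2^n\le\arg z<(2j+1)\pi/2^n\}$. $\Lambda_f=\sum_{k\ge0}(\sup_{\Delta_k}|f|)\mathbf{1}_{\Delta_k}$. *)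

theory Defs
  imports "HOL-Complex_Analysis.Complex_Analysis"
begin

definition area_measure :: "complex measure" where
  "area_measure = density lborel (\<lambda>_. ennreal (1 / pi))"

definition bergman1 :: "(complex \<Rightarrow> complex) set" where
  "bergman1 = {f. f holomorphic_on ball 0 1 \<and> set_integrable area_measure (ball 0 1) f}"

text \<open>Carleson box W(xi,h); arg(z conj xi) is the principal argument in (-pi,pi].\<close>
definition W_box :: "complex \<Rightarrow> real \<Rightarrow> complex set" where
  "W_box \<xi> h = {z \<in> ball 0 1. cmod z \<ge> 1 - h \<and> \<bar>Arg (z * cnj \<xi>)\<bar> \<le> pi * h}"

definition rho :: "complex measure \<Rightarrow> real \<Rightarrow> ennreal" where
  "rho \<mu> h = (SUP \<xi>\<in>sphere 0 1. emeasure \<mu> (W_box \<xi> h))"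

definition K2 :: "complex measure \<Rightarrow> real \<Rightarrow> ennreal" where
  "K2 \<mu> h = (SUP t\<in>{0<..<h}. rho \<mu> t / ennreal (t ^ 2))"

text \<open>Hastings--Luecking sets: k = 2^n + j - 1 with 0 \<le> j \<le> 2^n - 1.
  "arg z in [a,b)" means: some argument of z (determined mod 2 pi) lies in [a,b).\<close>
definition hl_n :: "nat \<Rightarrow> nat" where
  "hl_n k = (GREATEST n. 2 ^ n \<le> k + 1)"

definition hl_j :: "nat \<Rightarrow> nat" where
  "hl_j k = k + 1 - 2 ^ hl_n k"

definition HL_Delta :: "nat \<Rightarrow> complex set" where
  "HL_Delta k = (let n = hl_n k; j = hl_j k in
     {z. 1 - 1 / 2 ^ n \<le> cmod z \<and> cmod z < 1 - 1 / 2 ^ (n + 1) \<and>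
         (\<exists>\<theta>. (2 * real j - 1) * pi / 2 ^ n \<le> \<theta> \<and> \<theta> < (2 * real j + 1) * pi / 2 ^ n \<and>
              z = complex_of_real (cmod z) * cis \<theta>)})"

definition Lambda :: "(complex \<Rightarrow> complex) \<Rightarrow> complex \<Rightarrow> real" where
  "Lambda f z = (\<Sum>k. (SUP w\<in>HL_Delta k. cmod (f w)) * indicator (HL_Delta k) z)"

end

theory Submission
  imports Defs
begin


lemma hl_n_props: "2 ^ hl_n k \<le> k + 1 \<and> k + 1 < 2 ^ (hl_n k + 1)"
proof -
  have b: "\<forall>y. 2 ^ y \<le> k + 1 \<longrightarrow> y \<le> k + 1"
    using less_exp[of] by (metis dual_order.trans less_imp_le_nat)
  have P: "2 ^ hl_n k \<le> k + 1"
    unfolding hl_n_def by (rule GreatestI_nat[of _ 0]) (use b in auto)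
  moreover have "\<not> 2 ^ (hl_n k + 1) \<le> k + 1"
  proof
    assume "2 ^ (hl_n k + 1) \<le> k + 1"
    hence "hl_n k + 1 \<le> hl_n k" unfolding hl_n_def
      by (rule Greatest_le_nat) (use b in auto)
    thus False by simp
  qed
  ultimately show ?thesis by simp
qed

lemma hl_j_lt: "hl_j k < 2 ^ hl_n k" and hl_k_eq: "k = 2 ^ hl_n k + hl_j k - 1"
  using hl_n_props[of k] unfolding hl_j_def by auto

lemma hl_n_eq: assumes "j < 2 ^ n" shows "hl_n (2 ^ n + j - 1) = n"
proof -
  have pos: "(1::nat) \<le> 2 ^ n" by simp
  have e: "2 ^ n + j - 1 + 1 = 2 ^ n + j" using pos by simp
  show ?thesis unfolding hl_n_def e
  proof (rule Greatest_equality)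
    fix y assume "2 ^ y \<le> 2 ^ n + j"
    also have "\<dots> < 2 ^ (n+1)" using assms by simp
    finally show "y \<le> n" by (metis Suc_eq_plus1 less_Suc_eq_le power_less_imp_less_exp one_less_numeral_iff semiring_norm(76))
  qed simp
qed

lemma hl_j_eq: assumes "j < 2 ^ n" shows "hl_j (2 ^ n + j - 1) = j"
  using hl_n_eq[OF assms] unfolding hl_j_def
  by (metis add_diff_cancel_left' le_add_diff_inverse2 one_le_numeral one_le_power trans_le_add1)




lemma HL_Delta_eq: "HL_Delta k = {z. 1 - 1 / 2 ^ hl_n k \<le> cmod z \<and> cmod z < 1 - 1 / 2 ^ (hl_n k + 1) \<and>
         (\<exists>\<theta>. (2 * real (hl_j k) - 1) * pi / 2 ^ hl_n k \<le> \<theta> \<and> \<theta> < (2 * real (hl_j k) + 1) * pi / 2 ^ hl_n k \<and>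
              z = complex_of_real (cmod z) * cis \<theta>)}"
  unfolding HL_Delta_def Let_def by simp

lemma cis_plus_2pi: "cis (x + 2 * pi) = cis x"
  by (simp add: cis.ctr)
lemma cis_minus_2pi: "cis (x - 2 * pi) = cis x"
  using cis_plus_2pi[of "x - 2 * pi"] by simp

lemma norm_cis_eq: "complex_of_real (cmod z) * cis (Arg z) = z"
  by (cases "z = 0") (simp_all add: cis_Arg sgn_div_norm scaleR_conv_of_real)

lemma exists_level: assumes "cmod z < 1"
  shows "\<exists>n. 1 - 1 / 2 ^ n \<le> cmod z \<and> cmod z < 1 - 1 / 2 ^ (n + 1)"
proof -
  obtain N where N: "(1/2::real) ^ N < 1 - cmod z"
    using real_arch_pow_inv[of "1 - cmod z" "1/2::real"] assms by auto
  have "(1/2::real) ^ (N+1) \<le> (1/2)^N" by (rule power_decreasing) auto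
  hence ex: "cmod z < 1 - 1 / 2 ^ (N + 1)" using N by (simp add: power_one_over)
  define n where "n = (LEAST n. cmod z < 1 - 1 / (2::real) ^ (n + 1))"
  have n1: "cmod z < 1 - 1 / 2 ^ (n + 1)" unfolding n_def by (rule LeastI[of _ N]) (rule ex)
  have n2: "1 - 1 / 2 ^ n \<le> cmod z"
  proof (cases n)
    case 0 thus ?thesis by simp
  next
    case (Suc m)
    have "\<not> cmod z < 1 - 1 / 2 ^ (m + 1)"
      using not_less_Least[of m "\<lambda>n. cmod z < 1 - 1 / (2::real) ^ (n + 1)"] Suc n_def by simp
    thus ?thesis using Suc by simp
  qed
  show ?thesis using n1 n2 by blast
qed

lemma exists_angle:
  fixes n :: nat
  shows "\<exists>j<2^n. \<exists>\<theta>. (2 * real j - 1) * pi / 2 ^ n \<le> \<theta> \<and> \<theta> < (2 * real j + 1) * pi / 2 ^ n \<and>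
              z = complex_of_real (cmod z) * cis \<theta>"
proof -
  define s :: real where "s = 1 / 2 ^ n"
  have s0: "0 < s" "s \<le> 1" unfolding s_def by auto
  define \<phi> where "\<phi> = Arg z"
  have phb: "-pi < \<phi>" "\<phi> \<le> pi" using Arg_bounded[of z] unfolding \<phi>_def by auto
  define \<theta> where "\<theta> = (if \<phi> < - pi * s then \<phi> + 2 * pi else if \<phi> \<ge> 2 * pi - pi * s then \<phi> - 2 * pi else \<phi>)"
  have th: "- pi * s \<le> \<theta>" "\<theta> < 2 * pi - pi * s"
  proof -
    have "pi * s \<le> pi" using s0 by simp
    moreover have "0 \<le> pi * s" using s0 by simp
    ultimately show "- pi * s \<le> \<theta>" unfolding \<theta>_def mult_minus_left using phb pi_gt_zero
      by (smt (verit))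
    from \<open>pi * s \<le> pi\<close> \<open>0 \<le> pi * s\<close> show "\<theta> < 2 * pi - pi * s" unfolding \<theta>_def mult_minus_left using phb pi_gt_zero
      by (smt (verit))
  qed
  have zc: "z = complex_of_real (cmod z) * cis \<theta>"
    unfolding \<theta>_def using norm_cis_eq[of z] unfolding \<phi>_def
    by (auto simp: cis_plus_2pi cis_minus_2pi)
  define x where "x = \<theta> / (2 * pi * s) + 1/2"
  have x0: "0 \<le> x"
  proof -
    have "- 1/2 \<le> \<theta> / (2 * pi * s)" using th s0 pi_gt_zero by (simp add: field_simps)
    thus ?thesis unfolding x_def by simp
  qed
  have x1: "x < 2 ^ n"
  proof -
    have "\<theta> / (2 * pi * s) < (2 * pi - pi * s) / (2 * pi * s)"
      using th s0 pi_gt_zero by (intro divide_strict_right_mono) auto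
    also have "\<dots> = 1 / s - 1/2" using s0 pi_gt_zero by (simp add: field_simps)
    finally show ?thesis unfolding x_def s_def by simp
  qed
  define j where "j = nat \<lfloor>x\<rfloor>"
  have jx: "real j \<le> x" "x < real j + 1" unfolding j_def using x0 by linarith+
  have jlt: "j < 2 ^ n"
  proof -
    have "real j < 2 ^ n" using jx x1 by linarith
    thus ?thesis by (metis of_nat_less_iff of_nat_numeral of_nat_power)
  qed
  have e: "(2 * real j - 1) * pi / 2 ^ n = (2 * real j - 1) * pi * s"
    "(2 * real j + 1) * pi / 2 ^ n = (2 * real j + 1) * pi * s" unfolding s_def by simp_all
  have "(2 * real j - 1) * pi * s \<le> \<theta>"
  proof -
    have "2 * real j - 1 \<le> \<theta> / (pi * s)" using jx unfolding x_def by (simp add: field_simps)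
    thus ?thesis using s0 pi_gt_zero by (simp add: field_simps)
  qed
  moreover have "\<theta> < (2 * real j + 1) * pi * s"
  proof -
    have "\<theta> / (pi * s) < 2 * real j + 1" using jx unfolding x_def by (simp add: field_simps)
    thus ?thesis using s0 pi_gt_zero by (simp add: field_simps)
  qed
  ultimately show ?thesis using jlt zc e by metis
qed

lemma HL_cover: assumes "cmod z < 1" shows "\<exists>k. z \<in> HL_Delta k"
proof -
  obtain n where n: "1 - 1 / 2 ^ n \<le> cmod z" "cmod z < 1 - 1 / 2 ^ (n + 1)"
    using exists_level[OF assms] by blast
  obtain j where j: "j < 2^n" and a: "\<exists>\<theta>. (2 * real j - 1) * pi / 2 ^ n \<le> \<theta> \<and> \<theta> < (2 * real j + 1) * pi / 2 ^ n \<and>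
              z = complex_of_real (cmod z) * cis \<theta>" using exists_angle[of n z] by blast
  define k where "k = 2^n + j - 1"
  have hk: "hl_n k = n" "hl_j k = j" unfolding k_def using hl_n_eq[OF j] hl_j_eq[OF j] by auto
  have "z \<in> HL_Delta k" unfolding HL_Delta_eq hk using n a by blast
  thus ?thesis by blast
qed




lemma level_unique:
  fixes r :: real
  assumes "1 - 1 / 2 ^ n \<le> r" "r < 1 - 1 / 2 ^ (n + 1)"
    and "1 - 1 / 2 ^ m \<le> r" "r < 1 - 1 / 2 ^ (m + 1)"
  shows "n = m"
proof (rule ccontr)
  have key: "False" if "a < b" "1 - 1 / 2 ^ b \<le> r" "r < 1 - 1 / 2 ^ (a + 1)" for a b :: nat
  proof -
    have "(2::real) ^ (a+1) \<le> 2 ^ b" using that(1) by (intro power_increasing) auto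
    hence "1 / (2::real) ^ b \<le> 1 / 2 ^ (a+1)" by (intro divide_left_mono) auto
    thus False using that by linarith
  qed
  assume "n \<noteq> m"
  hence "n < m \<or> m < n" by auto
  thus False using key assms by blast
qed

lemma cis_eq_window:
  assumes "cis a = cis b" "c \<le> a" "a < c + 2 * pi" "c \<le> b" "b < c + 2 * pi"
  shows "a = b"
proof -
  have "cis (a - b) = 1" using assms(1) by (simp add: cis_divide[symmetric])
  hence "cos (a - b) = 1" by (simp add: complex_eq_iff)
  then obtain m :: int where m: "a - b = real_of_int m * 2 * pi" using cos_one_2pi_int by blast
  have "\<bar>m * 2 * pi\<bar> < 2 * pi" using assms(2-5) m by linarith
  hence "\<bar>real_of_int m\<bar> * (2 * pi) < 1 * (2 * pi)" by (simp add: abs_mult)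
  hence "\<bar>real_of_int m\<bar> < 1" using pi_gt_zero by (meson mult_less_cancel_right_pos zero_less_mult_iff zero_less_numeral)
  hence "m = 0" by linarith
  thus ?thesis using m by simp
qed

lemma angle_unique:
  fixes n j j' :: nat
  assumes z: "z \<noteq> 0" and j: "j < 2 ^ n" and j': "j' < 2 ^ n"
    and a: "(2 * real j - 1) * pi / 2 ^ n \<le> \<theta>" "\<theta> < (2 * real j + 1) * pi / 2 ^ n"
      "z = complex_of_real (cmod z) * cis \<theta>"
    and b: "(2 * real j' - 1) * pi / 2 ^ n \<le> \<theta>'" "\<theta>' < (2 * real j' + 1) * pi / 2 ^ n"
      "z = complex_of_real (cmod z) * cis \<theta>'"
  shows "j = j'"
proof -
  define s :: real where "s = 1 / 2 ^ n"
  have s0: "0 < s" unfolding s_def by simp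
  have "cis \<theta> = cis \<theta>'" using a(3) b(3) z by (metis mult_cancel_left of_real_eq_0_iff norm_eq_zero)
  have jr: "real j \<le> 2 ^ n - 1" "real j' \<le> 2 ^ n - 1"
  proof -
    have "j + 1 \<le> 2 ^ n" "j' + 1 \<le> 2 ^ n" using j j' by auto
    hence "real (j + 1) \<le> real (2 ^ n)" "real (j' + 1) \<le> real (2 ^ n)" by (simp_all only: of_nat_le_iff)
    thus "real j \<le> 2 ^ n - 1" "real j' \<le> 2 ^ n - 1" by simp_all
  qed
  have ss: "2 ^ n * s = 1" unfolding s_def by simp
  have w: "\<And>(x::real) y. (2 * x - 1) * pi / 2 ^ n \<le> y \<Longrightarrow> y < (2 * x + 1) * pi / 2 ^ n \<Longrightarrow> 0 \<le> x \<Longrightarrow>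
      x \<le> 2 ^ n - 1 \<Longrightarrow> - (pi * s) \<le> y \<and> y < - (pi * s) + 2 * pi"
  proof -
    fix x y :: real
    assume h: "(2 * x - 1) * pi / 2 ^ n \<le> y" "y < (2 * x + 1) * pi / 2 ^ n" "0 \<le> x" "x \<le> 2 ^ n - 1"
    have "(2 * x - 1) * pi / 2 ^ n = 2 * x * (pi * s) - pi * s" "(2 * x + 1) * pi / 2 ^ n = 2 * x * (pi * s) + pi * s"
      unfolding s_def by (simp_all add: field_simps)
    moreover have "2 * x * (pi * s) \<le> 2 * (2 ^ n - 1) * (pi * s)" using h s0 by (intro mult_right_mono) auto
    moreover have "2 * (2 ^ n - 1) * (pi * s) = 2 * pi - 2 * (pi * s)" using ss by (simp add: algebra_simps)
    moreover have "0 \<le> 2 * x * (pi * s)" using h s0 by simp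
    ultimately show "- (pi * s) \<le> y \<and> y < - (pi * s) + 2 * pi" using h by (smt (verit))
  qed
  have "\<theta> = \<theta>'" using cis_eq_window[OF \<open>cis \<theta> = cis \<theta>'\<close>] w[OF a(1,2) _ jr(1)] w[OF b(1,2) _ jr(2)] by auto
  have fl: "\<And>x::real. (2 * x - 1) * pi / 2 ^ n \<le> \<theta> \<Longrightarrow> \<theta> < (2 * x + 1) * pi / 2 ^ n \<Longrightarrow>
      x \<le> \<theta> * 2 ^ n / (2 * pi) + 1/2 \<and> \<theta> * 2 ^ n / (2 * pi) + 1/2 < x + 1"
  proof -
    fix x :: real
    assume h: "(2 * x - 1) * pi / 2 ^ n \<le> \<theta>" "\<theta> < (2 * x + 1) * pi / 2 ^ n"
    have p: "(0::real) < 2 ^ n" by simp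
    have "(2 * x - 1) * pi \<le> \<theta> * 2 ^ n" using h(1) p by (simp add: pos_divide_le_eq)
    hence "2 * x - 1 \<le> \<theta> * 2 ^ n / pi" using pi_gt_zero by (simp add: pos_le_divide_eq)
    moreover have "\<theta> * 2 ^ n < (2 * x + 1) * pi" using h(2) p by (simp add: pos_less_divide_eq)
    hence "\<theta> * 2 ^ n / pi < 2 * x + 1" using pi_gt_zero by (simp add: pos_divide_less_eq)
    moreover have "\<theta> * 2 ^ n / (2 * pi) = (\<theta> * 2 ^ n / pi) / 2" by simp
    ultimately show "x \<le> \<theta> * 2 ^ n / (2 * pi) + 1/2 \<and> \<theta> * 2 ^ n / (2 * pi) + 1/2 < x + 1"
      by linarith
  qed
  have "real j \<le> \<theta> * 2 ^ n / (2 * pi) + 1/2" "\<theta> * 2 ^ n / (2 * pi) + 1/2 < real j + 1"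
    "real j' \<le> \<theta> * 2 ^ n / (2 * pi) + 1/2" "\<theta> * 2 ^ n / (2 * pi) + 1/2 < real j' + 1"
    using fl[OF a(1,2)] fl b(1,2) \<open>\<theta> = \<theta>'\<close> by auto
  hence "real j < real j' + 1" "real j' < real j + 1" by linarith+
  thus ?thesis by linarith
qed

lemma HL_disj: assumes "z \<in> HL_Delta k" "z \<in> HL_Delta k'" shows "k = k'"
proof -
  obtain \<theta> where A: "1 - 1 / 2 ^ hl_n k \<le> cmod z" "cmod z < 1 - 1 / 2 ^ (hl_n k + 1)"
    "(2 * real (hl_j k) - 1) * pi / 2 ^ hl_n k \<le> \<theta>" "\<theta> < (2 * real (hl_j k) + 1) * pi / 2 ^ hl_n k"
    "z = complex_of_real (cmod z) * cis \<theta>" using assms(1) unfolding HL_Delta_eq by blast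
  obtain \<theta>' where B: "1 - 1 / 2 ^ hl_n k' \<le> cmod z" "cmod z < 1 - 1 / 2 ^ (hl_n k' + 1)"
    "(2 * real (hl_j k') - 1) * pi / 2 ^ hl_n k' \<le> \<theta>'" "\<theta>' < (2 * real (hl_j k') + 1) * pi / 2 ^ hl_n k'"
    "z = complex_of_real (cmod z) * cis \<theta>'" using assms(2) unfolding HL_Delta_eq by blast
  have nn: "hl_n k = hl_n k'" using level_unique[OF A(1,2) B(1,2)] .
  have jj: "hl_j k = hl_j k'"
  proof (cases "hl_n k = 0")
    case True thus ?thesis using hl_j_lt[of k] hl_j_lt[of k'] nn by simp
  next
    case False
    hence "(2::real) ^ 1 \<le> 2 ^ hl_n k" by (intro power_increasing) auto
    hence "(2::real) \<le> 2 ^ hl_n k" by simp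
    hence "1 / 2 ^ hl_n k \<le> (1/2::real)" by (simp add: field_simps)
    hence "z \<noteq> 0" using A(1) by auto
    have l2: "hl_j k' < 2 ^ hl_n k" using hl_j_lt[of k'] nn by simp
    show ?thesis by (rule angle_unique[OF \<open>z \<noteq> 0\<close> hl_j_lt l2 A(3-5)]) (use B(3-5) nn in auto)
  qed
  show ?thesis using hl_k_eq[of k] hl_k_eq[of k'] nn jj by metis
qed




lemma sgn_borel: "(\<lambda>z::complex. sgn z) \<in> borel_measurable borel"
  unfolding sgn_div_norm by measurable

lemma arc_closed_borel: "cis ` {a..b} \<in> sets borel"
proof -
  have "compact (cis ` {a..b})"
    by (rule compact_continuous_image) (auto intro!: continuous_intros simp: cis_conv_exp)
  thus ?thesis by (simp add: compact_imp_closed)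
qed

lemma arc_borel: "cis ` {a..<b} \<in> sets borel"
proof -
  have "{a..<b} = (\<Union>m. {a..b - 1 / Suc m})"
  proof (intro equalityI subsetI)
    fix x assume "x \<in> {a..<b}"
    then obtain m where "inverse (real (Suc m)) < b - x" using reals_Archimedean[of "b - x"] by auto
    hence "x \<le> b - 1 / Suc m" by (simp add: inverse_eq_divide)
    thus "x \<in> (\<Union>m. {a..b - 1 / Suc m})" using \<open>x \<in> {a..<b}\<close> by (intro UN_I[of m]) auto
  next
    fix x assume "x \<in> (\<Union>m. {a..b - 1 / Suc m})"
    then obtain m where "a \<le> x" "x \<le> b - 1 / Suc m" by auto
    moreover have "0 < 1 / real (Suc m)" by simp
    ultimately have "x < b" by linarith
    thus "x \<in> {a..<b}" using \<open>a \<le> x\<close> by simp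
  qed
  hence "cis ` {a..<b} = (\<Union>m. cis ` {a..b - 1 / Suc m})" by auto
  thus ?thesis using arc_closed_borel by auto
qed

lemma polar_iff:
  assumes "a < b"
  shows "(\<exists>\<theta>. a \<le> \<theta> \<and> \<theta> < b \<and> z = complex_of_real (cmod z) * cis \<theta>) \<longleftrightarrow> (z = 0 \<or> sgn z \<in> cis ` {a..<b})"
proof (cases "z = 0")
  case True thus ?thesis using assms by auto
next
  case False
  have e: "z = complex_of_real (cmod z) * cis \<theta> \<longleftrightarrow> sgn z = cis \<theta>" for \<theta>
  proof
    assume "z = complex_of_real (cmod z) * cis \<theta>"
    hence "sgn z = sgn (complex_of_real (cmod z) * cis \<theta>)" by simp
    also have "\<dots> = cis \<theta>" using False by (simp add: sgn_mult sgn_of_real)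
    finally show "sgn z = cis \<theta>" .
  next
    assume "sgn z = cis \<theta>"
    thus "z = complex_of_real (cmod z) * cis \<theta>" by (metis mult_sgn_abs norm_cis_eq cis_Arg False)
  qed
  show ?thesis using False by (auto simp: e)
qed

lemma HL_Delta_borel: "HL_Delta k \<in> sets borel"
proof -
  define n where "n = hl_n k"
  define j where "j = hl_j k"
  define a where "a = (2 * real j - 1) * pi / 2 ^ n"
  define b where "b = (2 * real j + 1) * pi / 2 ^ n"
  have ab: "a < b" unfolding a_def b_def by (simp add: divide_strict_right_mono)
  have "HL_Delta k = {z. 1 - 1 / 2 ^ n \<le> cmod z} \<inter> {z. cmod z < 1 - 1 / 2 ^ (n + 1)} \<inter>
      ({0} \<union> (sgn -` cis ` {a..<b}))"
    unfolding HL_Delta_eq n_def[symmetric] j_def[symmetric] a_def[symmetric] b_def[symmetric] polar_iff[OF ab]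
    by auto
  also have "\<dots> \<in> sets borel"
  proof -
    have "sgn -` cis ` {a..<b} \<in> sets borel"
      using measurable_sets[OF sgn_borel arc_borel[of a b]] by simp
    moreover have "{z::complex. 1 - 1 / 2 ^ n \<le> cmod z} \<in> sets borel" by measurable
    moreover have "{z::complex. cmod z < 1 - 1 / 2 ^ (n + 1)} \<in> sets borel" by measurable
    ultimately show ?thesis by auto
  qed
  finally show ?thesis .
qed

lemma W_box_eq:
  assumes "0 < s" "s < 1" "\<xi> \<noteq> 0"
  shows "W_box \<xi> s = ball 0 1 \<inter> {z. 1 - s \<le> cmod z} \<inter> ((\<lambda>z. sgn (z * cnj \<xi>)) -` cis ` {- (pi * s)..pi * s})"
proof -
  have "\<bar>Arg w\<bar> \<le> pi * s \<longleftrightarrow> sgn w \<in> cis ` {- (pi * s)..pi * s}" if "w \<noteq> 0" for w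
  proof
    assume "\<bar>Arg w\<bar> \<le> pi * s"
    thus "sgn w \<in> cis ` {- (pi * s)..pi * s}" using cis_Arg[OF that] by (intro image_eqI[of _ _ "Arg w"]) auto
  next
    assume "sgn w \<in> cis ` {- (pi * s)..pi * s}"
    then obtain \<theta> where th: "\<theta> \<in> {- (pi * s)..pi * s}" "sgn w = cis \<theta>" by auto
    have "pi * s < pi" using assms by simp
    have "- pi < \<theta>" using th(1) \<open>pi * s < pi\<close> unfolding atLeastAtMost_iff by linarith
    moreover have "\<theta> \<le> pi" using th(1) \<open>pi * s < pi\<close> unfolding atLeastAtMost_iff by linarith
    ultimately have "Arg w = \<theta>" using cis_Arg_unique[OF th(2)] by auto
    thus "\<bar>Arg w\<bar> \<le> pi * s" using th by auto
  qed
  moreover have "z * cnj \<xi> \<noteq> 0" if "1 - s \<le> cmod z" "\<xi> \<noteq> 0" for z using that assms by auto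
  ultimately show ?thesis
    unfolding W_box_def using assms
    by auto
qed

lemma W_box_borel:
  assumes "0 < s" "s < 1" "\<xi> \<noteq> 0"
  shows "W_box \<xi> s \<in> sets borel"
proof -
  have m: "(\<lambda>z. sgn (z * cnj \<xi>)) \<in> borel_measurable borel"
    using measurable_compose[OF _ sgn_borel, of "\<lambda>z. z * cnj \<xi>" borel] by measurable
  have "(\<lambda>z. sgn (z * cnj \<xi>)) -` cis ` {- (pi * s)..pi * s} \<inter> space borel \<in> sets borel"
    by (rule measurable_sets[OF m arc_closed_borel])
  hence "(\<lambda>z. sgn (z * cnj \<xi>)) -` cis ` {- (pi * s)..pi * s} \<in> sets borel" by simp
  moreover have "{z::complex. 1 - s \<le> cmod z} \<in> sets borel" by measurable
  ultimately show ?thesis unfolding W_box_eq[OF assms] by auto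
qed




lemma Delta_sub_W:
  assumes "hl_n k \<ge> 1"
  shows "HL_Delta k \<subseteq> W_box (cis (2 * real (hl_j k) * pi / 2 ^ hl_n k)) (1 / 2 ^ hl_n k)"
proof
  fix z assume z: "z \<in> HL_Delta k"
  define n where "n = hl_n k"
  define j where "j = hl_j k"
  define s :: real where "s = 1 / 2 ^ n"
  have s: "0 < s" "s \<le> 1/2"
  proof -
    show "0 < s" unfolding s_def by simp
    have "(2::real) ^ 1 \<le> 2 ^ n" using assms unfolding n_def by (intro power_increasing) auto
    thus "s \<le> 1/2" unfolding s_def by (simp add: field_simps)
  qed
  define c where "c = 2 * real j * pi / 2 ^ n"
  obtain \<theta> where A: "1 - s \<le> cmod z" "cmod z < 1 - 1 / 2 ^ (n + 1)"
    "(2 * real j - 1) * pi / 2 ^ n \<le> \<theta>" "\<theta> < (2 * real j + 1) * pi / 2 ^ n"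
    "z = complex_of_real (cmod z) * cis \<theta>" using z unfolding HL_Delta_eq n_def[symmetric] j_def[symmetric] s_def by blast
  have e1: "(2 * real j - 1) * pi / 2 ^ n = c - pi * s" "(2 * real j + 1) * pi / 2 ^ n = c + pi * s"
    unfolding c_def s_def by (simp_all add: field_simps)
  have th: "- (pi * s) \<le> \<theta> - c" "\<theta> - c < pi * s" using A(3,4) unfolding e1 by linarith+
  have "pi * s < pi" using s by simp
  have z0: "cmod z > 0" using A(1) s by linarith
  have "z * cnj (cis c) = complex_of_real (cmod z) * cis (\<theta> - c)"
    by (subst A(5)) (simp add: cis_cnj cis_mult mult.assoc)
  hence "sgn (z * cnj (cis c)) = cis (\<theta> - c)" using z0 by (simp add: sgn_mult sgn_of_real)
  hence "Arg (z * cnj (cis c)) = \<theta> - c"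
    by (rule cis_Arg_unique) (use th \<open>pi * s < pi\<close> in linarith)+
  moreover have "cmod z < 1" using A(2) by (smt (verit) divide_pos_pos zero_less_power)
  ultimately show "z \<in> W_box (cis (2 * real (hl_j k) * pi / 2 ^ hl_n k)) (1 / 2 ^ hl_n k)"
    unfolding W_box_def c_def[symmetric, unfolded j_def n_def] s_def[unfolded n_def, symmetric]
    using A(1) th unfolding n_def by auto
qed

lemma disk_polar:
  assumes "0 < r" "r < R" "z \<in> ball (complex_of_real R * cis \<phi>) r"
  shows "R - r < cmod z \<and> cmod z < R + r \<and>
    (\<exists>\<theta>. \<bar>\<theta> - \<phi>\<bar> \<le> r / (R - r) \<and> z = complex_of_real (cmod z) * cis \<theta>)"
proof -
  define w where "w = z * cis (- \<phi>)"
  have d: "cmod (w - complex_of_real R) = cmod (z - complex_of_real R * cis \<phi>)"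
  proof -
    have "w - complex_of_real R = (z - complex_of_real R * cis \<phi>) * cis (- \<phi>)"
      unfolding w_def by (simp add: algebra_simps cis_mult)
    thus ?thesis by (simp add: norm_mult)
  qed
  hence dr: "cmod (w - complex_of_real R) < r" using assms(3) by (simp add: dist_norm norm_minus_commute)
  have nz: "cmod z = cmod w" unfolding w_def by (simp add: norm_mult)
  have "cmod w < R + r" using dr norm_triangle_ineq2[of w "complex_of_real R"] assms by simp
  moreover have "R - r < cmod w" using dr norm_triangle_ineq3[of w "complex_of_real R"] assms(2)
    by (smt (verit) norm_of_real)
  moreover
  have re: "R - r < Re w" using dr abs_Re_le_cmod[of "w - complex_of_real R"] by auto
  have im: "\<bar>Im w\<bar> < r" using dr abs_Im_le_cmod[of "w - complex_of_real R"] by auto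
  have rep: "0 < Re w" using re assms by linarith
  have "\<bar>Arg w\<bar> \<le> r / (R - r)"
  proof -
    have "\<bar>Arg w\<bar> = \<bar>arctan (Im w / Re w)\<bar>" using arg_conv_arctan[OF rep] by simp
    also have "\<dots> \<le> \<bar>Im w / Re w\<bar>" by (rule abs_arctan_le)
    also have "\<dots> = \<bar>Im w\<bar> / Re w" using rep by simp
    also have "\<dots> \<le> r / (R - r)" using im re rep assms by (intro frac_le) auto
    finally show ?thesis .
  qed
  moreover have "z = complex_of_real (cmod z) * cis (Arg w + \<phi>)"
  proof -
    have "z = w * cis \<phi>" unfolding w_def by (simp add: cis_mult)
    also have "\<dots> = complex_of_real (cmod w) * cis (Arg w) * cis \<phi>" using norm_cis_eq[of w] by simp
    finally show ?thesis using nz by (simp add: cis_mult mult.assoc)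
  qed
  ultimately show ?thesis using nz by (intro conjI exI[of _ "Arg w + \<phi>"]) auto
qed




lemma sets_area [simp]: "sets area_measure = sets borel"
  unfolding area_measure_def by simp

lemma area_ball: assumes "0 \<le> r" shows "emeasure area_measure (ball c r) = ennreal (r ^ 2)"
proof -
  have "emeasure area_measure (ball c r) = ennreal (1 / pi) * emeasure lborel (ball c r)"
    unfolding area_measure_def
    by (subst emeasure_density) (auto intro: nn_integral_cmult_indicator)
  also have "emeasure lborel (ball c r) = ennreal (pi * r ^ 2)"
    using emeasure_ball[OF assms, of c] by (simp add: eval_unit_ball_vol)
  also have "ennreal (1 / pi) * ennreal (pi * r ^ 2) = ennreal (r ^ 2)"
    by (subst ennreal_mult'[symmetric]) auto
  finally show ?thesis .
qed




lemma exists_D: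
  assumes "hl_n k \<ge> 1"
  shows "\<exists>D \<in> sets borel. D \<subseteq> HL_Delta k \<and> emeasure area_measure D = ennreal ((1 / 2 ^ hl_n k) ^ 2 / 4)"
proof -
  define n where "n = hl_n k"
  define j where "j = hl_j k"
  define s :: real where "s = 1 / 2 ^ n"
  have s: "0 < s" "s \<le> 1/2"
  proof -
    show "0 < s" unfolding s_def by simp
    have "(2::real) ^ 1 \<le> 2 ^ n" using assms unfolding n_def by (intro power_increasing) auto
    thus "s \<le> 1/2" unfolding s_def by (simp add: field_simps)
  qed
  define c where "c = 2 * real j * pi / 2 ^ n"
  define R where "R = 1 - 3 * s / 4"
  define \<phi> where "\<phi> i = c + (6 * real i - 9) * s / 5" for i :: nat
  define B where "B i = ball (complex_of_real R * cis (\<phi> i)) (s / 4)" for i :: nat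
  have e1: "(2 * real j - 1) * pi / 2 ^ n = c - pi * s" "(2 * real j + 1) * pi / 2 ^ n = c + pi * s"
    unfolding c_def s_def by (simp_all add: field_simps)
  have e2: "1 / 2 ^ (n + 1) = s / 2" unfolding s_def by simp
  have pis: "3 * s < pi * s" using pi_gt3 s by simp
  have key: "R - s / 4 < cmod z \<and> cmod z < R + s / 4 \<and>
      (\<exists>\<theta>. \<bar>\<theta> - \<phi> i\<bar> \<le> s / 2 \<and> z = complex_of_real (cmod z) * cis \<theta>)" if "z \<in> B i" for z i
  proof -
    have "0 < s / 4" "s / 4 < R" using s unfolding R_def by auto
    from disk_polar[OF this that[unfolded B_def]] obtain \<theta> where
      h: "R - s / 4 < cmod z" "cmod z < R + s / 4" "\<bar>\<theta> - \<phi> i\<bar> \<le> s / 4 / (R - s / 4)"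
        "z = complex_of_real (cmod z) * cis \<theta>" by blast
    have "s / 4 / (R - s / 4) \<le> s / 2"
    proof -
      have "R - s / 4 = 1 - s" unfolding R_def by simp
      moreover have "s * s \<le> s * (1/2)" using s by (intro mult_left_mono) auto
      hence "s / 4 \<le> s / 2 * (1 - s)" by (simp add: algebra_simps)
      ultimately show ?thesis using s by (simp add: pos_divide_le_eq)
    qed
    hence "\<bar>\<theta> - \<phi> i\<bar> \<le> s / 2" using h(3) by linarith
    thus ?thesis using h(1,2,4) by blast
  qed
  have sub: "B i \<subseteq> HL_Delta k" if "i < 4" for i
  proof
    fix z assume z: "z \<in> B i"
    obtain \<theta> where h: "R - s / 4 < cmod z" "cmod z < R + s / 4" "\<bar>\<theta> - \<phi> i\<bar> \<le> s / 2"
        "z = complex_of_real (cmod z) * cis \<theta>" using key[OF z] by blast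
    have "\<bar>6 * real i - 9\<bar> \<le> 9" using that by auto
    hence "\<bar>(6 * real i - 9) * s / 5\<bar> \<le> 9 * s / 5" using s by (simp add: abs_mult mult_right_mono)
    hence "\<bar>\<theta> - c\<bar> \<le> 23 * s / 10" using h(3) unfolding \<phi>_def by linarith
    hence "c - pi * s \<le> \<theta>" "\<theta> < c + pi * s" using pis by linarith+
    moreover have "1 - s \<le> cmod z" "cmod z < 1 - s / 2" using h(1,2) unfolding R_def by linarith+
    ultimately show "z \<in> HL_Delta k" unfolding HL_Delta_eq n_def[symmetric] j_def[symmetric] e1 e2
      s_def[symmetric] using h(4) by blast
  qed
  have disj: "disjoint_family_on B {..<4}"
  proof (unfold disjoint_family_on_def, intro ballI impI equalityI subsetI)
    fix i i' z assume ii: "i \<in> {..<4}" "i' \<in> {..<4}" "i \<noteq> i'" and z: "z \<in> B i \<inter> B i'"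
    obtain \<theta> where h: "R - s / 4 < cmod z" "\<bar>\<theta> - \<phi> i\<bar> \<le> s / 2"
        "z = complex_of_real (cmod z) * cis \<theta>" using key[of z i] z by blast
    obtain \<theta>' where h': "\<bar>\<theta>' - \<phi> i'\<bar> \<le> s / 2"
        "z = complex_of_real (cmod z) * cis \<theta>'" using key[of z i'] z by blast
    have "z \<noteq> 0" using h(1) s unfolding R_def by auto
    hence cc: "cis \<theta> = cis \<theta>'" using h(3) h'(2) by (metis mult_cancel_left of_real_eq_0_iff norm_eq_zero)
    have b9: "\<bar>(6 * real m - 9) * s / 5\<bar> \<le> 9 * s / 5" if "m < 4" for m
    proof -
      have "\<bar>6 * real m - 9\<bar> \<le> 9" using that by auto
      thus ?thesis using s by (simp add: abs_mult mult_right_mono)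
    qed
    have "\<bar>(6 * real i - 9) * s / 5\<bar> \<le> 9 * s / 5" "\<bar>(6 * real i' - 9) * s / 5\<bar> \<le> 9 * s / 5"
      using b9 ii by auto
    hence w1: "\<bar>\<theta> - c\<bar> \<le> 23 * s / 10" and w2: "\<bar>\<theta>' - c\<bar> \<le> 23 * s / 10"
      using h(2) h'(1) unfolding \<phi>_def by linarith+
    have "46 * s / 10 < 2 * pi" using s pi_gt3 by linarith
    hence "\<theta> = \<theta>'" using cis_eq_window[OF cc, of "c - 23 * s / 10"] w1 w2 by linarith
    hence "\<bar>\<phi> i - \<phi> i'\<bar> \<le> s" using h(2) h'(1) by linarith
    moreover have "\<phi> i - \<phi> i' = 6 * (real i - real i') * s / 5" unfolding \<phi>_def by (simp add: field_simps)
    moreover have "1 \<le> \<bar>real i - real i'\<bar>" using ii(3) by linarith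
    hence "6 * s / 5 \<le> \<bar>6 * (real i - real i') * s / 5\<bar>" using s by (simp add: abs_mult mult_right_mono)
    ultimately show "z \<in> {}" using s by linarith
  qed simp
  define D where "D = (\<Union>i\<in>{..<4}. B i)"
  have Bb: "B ` {..<4} \<subseteq> sets area_measure" unfolding B_def by auto
  have "emeasure area_measure D = (\<Sum>i\<in>{..<4::nat}. emeasure area_measure (B i))"
    unfolding D_def by (rule sum_emeasure[symmetric, OF Bb disj]) simp
  also have "\<dots> = (\<Sum>i\<in>{..<4::nat}. ennreal ((s / 4) ^ 2))" unfolding B_def using s by (simp add: area_ball)
  also have "\<dots> = ennreal (s ^ 2 / 4)"
  proof -
    have "ennreal (s ^ 2 / 4) = ennreal 4 * ennreal ((s / 4) ^ 2)"
      by (subst ennreal_mult[symmetric]) (auto simp: power2_eq_square)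
    thus ?thesis by simp
  qed
  finally have "emeasure area_measure D = ennreal (s ^ 2 / 4)" .
  moreover have "D \<in> sets borel" unfolding D_def B_def by auto
  moreover have "D \<subseteq> HL_Delta k" unfolding D_def using sub by auto
  ultimately show ?thesis unfolding s_def n_def by blast
qed




lemma cball_sub_ball: "a < 1 \<Longrightarrow> cball (0::complex) a \<subseteq> ball 0 1" by auto

lemma Delta_sub_cball: "HL_Delta k \<subseteq> cball 0 (1 - 1 / 2 ^ (hl_n k + 1))"
proof
  fix z assume "z \<in> HL_Delta k"
  hence "cmod z < 1 - 1 / 2 ^ (hl_n k + 1)" unfolding HL_Delta_eq by blast
  thus "z \<in> cball 0 (1 - 1 / 2 ^ (hl_n k + 1))" by simp
qed

lemma Delta_sub_ball: "HL_Delta k \<subseteq> ball 0 1"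
proof -
  have "0 < 1 / (2::real) ^ (hl_n k + 1)" by simp
  hence "cball 0 (1 - 1 / 2 ^ (hl_n k + 1)) \<subseteq> ball (0::complex) 1" by (intro cball_sub_ball) linarith
  thus ?thesis using Delta_sub_cball[of k] by blast
qed

lemma bdd_f:
  assumes "continuous_on (ball 0 1) f"
  shows "bdd_above ((\<lambda>w. cmod (f w)) ` HL_Delta k)"
proof -
  define r :: real where "r = 1 - 1 / 2 ^ (hl_n k + 1)"
  have "0 < 1 / (2::real) ^ (hl_n k + 1)" by simp
  hence cb: "cball 0 r \<subseteq> ball (0::complex) 1" unfolding r_def by (intro cball_sub_ball) linarith
  have "compact (f ` cball 0 r)"
    by (rule compact_continuous_image) (use continuous_on_subset[OF assms cb] in auto)
  hence "bounded (f ` cball 0 r)" by (rule compact_imp_bounded)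
  then obtain B where B: "\<forall>x\<in>f ` cball 0 r. norm x \<le> B" unfolding bounded_iff by blast
  show ?thesis unfolding bdd_above_def using B Delta_sub_cball[of k] unfolding r_def[symmetric] by blast
qed

lemma Lambda_val:
  assumes "z \<in> HL_Delta k"
  shows "Lambda f z = (SUP w\<in>HL_Delta k. cmod (f w))"
proof -
  have "(\<lambda>i. (SUP w\<in>HL_Delta i. cmod (f w)) * indicator (HL_Delta i) z) =
        (\<lambda>i. if i = k then (SUP w\<in>HL_Delta i. cmod (f w)) else 0)"
  proof (rule ext)
    fix i show "(SUP w\<in>HL_Delta i. cmod (f w)) * indicator (HL_Delta i) z =
        (if i = k then (SUP w\<in>HL_Delta i. cmod (f w)) else 0)"
    proof (cases "i = k")
      case True thus ?thesis using assms by simp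
    next
      case False
      hence "z \<notin> HL_Delta i" using HL_disj[OF assms, of i] by blast
      thus ?thesis using False by simp
    qed
  qed
  hence "Lambda f z = (\<Sum>i. if i = k then (SUP w\<in>HL_Delta i. cmod (f w)) else 0)"
    unfolding Lambda_def by (simp only:)
  also have "\<dots> = (SUP w\<in>HL_Delta k. cmod (f w))" by (rule sums_unique[OF sums_single, symmetric])
  finally show ?thesis .
qed

lemma Lambda_zero:
  assumes "\<And>k. z \<notin> HL_Delta k"
  shows "Lambda f z = 0"
  unfolding Lambda_def using assms by simp

lemma Lambda_set:
  assumes "0 < t"
  shows "{z. Lambda f z > t} = (\<Union>k\<in>{k. t < (SUP w\<in>HL_Delta k. cmod (f w))}. HL_Delta k)"
proof (intro equalityI subsetI)
  fix z assume "z \<in> {z. Lambda f z > t}"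
  hence "Lambda f z > t" by simp
  have "\<exists>k. z \<in> HL_Delta k"
  proof (rule ccontr)
    assume "\<nexists>k. z \<in> HL_Delta k"
    hence "Lambda f z = 0" using Lambda_zero[of z f] by blast
    thus False using \<open>Lambda f z > t\<close> assms by simp
  qed
  then obtain k where k: "z \<in> HL_Delta k" by blast
  thus "z \<in> (\<Union>k\<in>{k. t < (SUP w\<in>HL_Delta k. cmod (f w))}. HL_Delta k)"
  proof -
    have "t < (SUP w\<in>HL_Delta k. cmod (f w))" using \<open>Lambda f z > t\<close> unfolding Lambda_val[OF k] .
    thus ?thesis using k by blast
  qed
next
  fix z assume "z \<in> (\<Union>k\<in>{k. t < (SUP w\<in>HL_Delta k. cmod (f w))}. HL_Delta k)"
  then obtain k where k: "z \<in> HL_Delta k" "t < (SUP w\<in>HL_Delta k. cmod (f w))" by blast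
  have "Lambda f z = (SUP w\<in>HL_Delta k. cmod (f w))" by (rule Lambda_val[OF k(1)])
  thus "z \<in> {z. Lambda f z > t}" using k(2) by (simp only: mem_Collect_eq)
qed

lemma Lambda_set_borel:
  assumes "0 < t"
  shows "{z. Lambda f z > t} \<in> sets borel"
  unfolding Lambda_set[OF assms] by (intro sets.countable_UN') (auto intro: HL_Delta_borel)




theorem lemma2p3:
  fixes f :: "complex \<Rightarrow> complex" and \<mu> :: "complex measure" and h t :: real
  assumes "f \<in> bergman1"
    and "sets \<mu> = sets (restrict_space borel (ball 0 1))"
    and "finite_measure \<mu>"
    and "0 < h" and "h < 1 / 2" and "0 < t"
  shows "emeasure \<mu> {z \<in> ball 0 1. cmod z > 1 - h \<and> cmod (f z) > t}
           \<le> 4 * K2 \<mu> (2 * h) * emeasure area_measure {z. Lambda f z > t}"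
proof -
  have hol: "f holomorphic_on ball 0 1" using assms(1) unfolding bergman1_def by simp
  have cont: "continuous_on (ball 0 1) f" by (rule holomorphic_on_imp_continuous_on[OF hol])
  define F where "F k = (SUP w\<in>HL_Delta k. cmod (f w))" for k
  define I where "I = {k. t < F k \<and> 1 / 2 ^ (hl_n k + 1) < h}"
  define E where "E = {z \<in> ball 0 1. cmod z > 1 - h \<and> cmod (f z) > t}"
  define K where "K = K2 \<mu> (2 * h)"
  have nI: "hl_n k \<ge> 1" if "k \<in> I" for k
  proof (rule ccontr)
    assume "\<not> 1 \<le> hl_n k"
    hence "hl_n k = 0" by simp
    thus False using that assms(5) unfolding I_def by simp
  qed
  have cov: "E \<subseteq> (\<Union>k\<in>I. HL_Delta k)"
  proof
    fix z assume z: "z \<in> E"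
    hence "cmod z < 1" unfolding E_def by simp
    then obtain k where k: "z \<in> HL_Delta k" using HL_cover by blast
    have "cmod (f z) \<le> F k" unfolding F_def by (rule cSUP_upper[OF k bdd_f[OF cont]])
    hence "t < F k" using z unfolding E_def by simp
    moreover have "cmod z < 1 - 1 / 2 ^ (hl_n k + 1)" using k unfolding HL_Delta_eq by blast
    hence "1 / 2 ^ (hl_n k + 1) < h" using z unfolding E_def by simp
    ultimately show "z \<in> (\<Union>k\<in>I. HL_Delta k)" using k unfolding I_def by blast
  qed
  define P where "P k D \<longleftrightarrow> D \<in> sets borel \<and> D \<subseteq> HL_Delta k \<and>
      emeasure area_measure D = ennreal ((1 / 2 ^ hl_n k) ^ 2 / 4)" for k D
  define D where "D k = (if k \<in> I then (SOME D. P k D) else {})" for k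
  have DI: "P k (D k)" if "k \<in> I" for k
  proof -
    have "\<exists>D. P k D" using exists_D[OF nI[OF that]] unfolding P_def by blast
    thus ?thesis unfolding D_def using that by (simp add: someI_ex)
  qed
  have Db: "D k \<in> sets borel" and Ds: "D k \<subseteq> HL_Delta k" for k
    using DI[of k] unfolding P_def D_def by (cases "k \<in> I"; auto)+
  define A where "A k = (if k \<in> I then HL_Delta k else {})" for k
  have setsmu: "X \<in> sets \<mu>" if "X \<in> sets borel" "X \<subseteq> ball 0 1" for X
    unfolding assms(2) using that by (subst sets_restrict_space_iff) auto
  have Amu: "A k \<in> sets \<mu>" for k
    unfolding A_def using setsmu[OF HL_Delta_borel Delta_sub_ball] by (simp add: sets.empty_sets)
  have bound: "emeasure \<mu> (A k) \<le> 4 * K * emeasure area_measure (D k)" for k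
  proof (cases "k \<in> I")
    case False thus ?thesis unfolding A_def by simp
  next
    case True
    define n where "n = hl_n k"
    define s :: real where "s = 1 / 2 ^ n"
    have s: "0 < s" "s \<le> 1/2"
    proof -
      show "0 < s" unfolding s_def by simp
      have "(2::real) ^ 1 \<le> 2 ^ n" using nI[OF True] unfolding n_def by (intro power_increasing) auto
      thus "s \<le> 1/2" unfolding s_def by (simp add: field_simps)
    qed
    have "1 / 2 ^ (n + 1) < h" using True unfolding I_def n_def by simp
    moreover have "1 / 2 ^ (n + 1) = s / 2" unfolding s_def by simp
    ultimately have s2h: "s < 2 * h" by simp
    define \<xi> where "\<xi> = cis (2 * real (hl_j k) * pi / 2 ^ hl_n k)"
    have \<xi>: "\<xi> \<in> sphere 0 1" "\<xi> \<noteq> 0" unfolding \<xi>_def by auto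
    have Wmu: "W_box \<xi> s \<in> sets \<mu>"
      by (rule setsmu[OF W_box_borel]) (use s \<xi> in \<open>auto simp: W_box_def\<close>)
    have "emeasure \<mu> (A k) \<le> emeasure \<mu> (W_box \<xi> s)"
      unfolding A_def using True Delta_sub_W[OF nI[OF True]] Wmu
      unfolding \<xi>_def s_def n_def by (auto intro!: emeasure_mono)
    also have "\<dots> \<le> rho \<mu> s" unfolding rho_def by (rule SUP_upper[OF \<xi>(1)])
    also have "\<dots> \<le> K * ennreal (s ^ 2)"
    proof -
      have "rho \<mu> s / ennreal (s ^ 2) \<le> K" unfolding K_def K2_def
        by (rule SUP_upper) (use s s2h in auto)
      hence "rho \<mu> s / ennreal (s ^ 2) * ennreal (s ^ 2) \<le> K * ennreal (s ^ 2)"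
        by (rule mult_right_mono) simp
      moreover have "rho \<mu> s / ennreal (s ^ 2) * ennreal (s ^ 2) = rho \<mu> s"
        using s by (simp add: ennreal_divide_times)
      ultimately show ?thesis by simp
    qed
    also have "ennreal (s ^ 2) = 4 * emeasure area_measure (D k)"
    proof -
      have "emeasure area_measure (D k) = ennreal (s ^ 2 / 4)"
        using DI[OF True] unfolding P_def s_def n_def by simp
      moreover have "ennreal (s ^ 2) = ennreal 4 * ennreal (s ^ 2 / 4)"
        by (subst ennreal_mult[symmetric]) auto
      ultimately show ?thesis by simp
    qed
    finally show ?thesis by (simp add: mult.assoc mult.left_commute)
  qed
  have disjD: "disjoint_family D"
    unfolding disjoint_family_on_def using Ds HL_disj by blast
  have DL: "(\<Union>k. D k) \<subseteq> {z. Lambda f z > t}"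
  proof
    fix z assume "z \<in> (\<Union>k. D k)"
    then obtain k where zk: "z \<in> D k" by blast
    hence kI: "k \<in> I" unfolding D_def by (cases "k \<in> I") auto
    have zd: "z \<in> HL_Delta k" using zk Ds by blast
    have "Lambda f z = F k" unfolding F_def by (rule Lambda_val[OF zd])
    thus "z \<in> {z. Lambda f z > t}" using kI unfolding I_def by simp
  qed
  have main: "emeasure \<mu> E \<le> 4 * K * emeasure area_measure {z. Lambda f z > t}"
  proof (cases "E \<in> sets \<mu>")
    case False thus ?thesis by (simp add: emeasure_notin_sets)
  next
    case True
    have "E \<subseteq> (\<Union>k. A k)" using cov unfolding A_def by auto
    hence "emeasure \<mu> E \<le> emeasure \<mu> (\<Union>k. A k)"
      using Amu by (intro emeasure_mono) auto
    also have "\<dots> \<le> (\<Sum>k. emeasure \<mu> (A k))"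
      using Amu by (intro emeasure_subadditive_countably) auto
    also have "\<dots> \<le> (\<Sum>k. 4 * K * emeasure area_measure (D k))"
      by (intro suminf_le bound) auto
    also have "\<dots> = 4 * K * (\<Sum>k. emeasure area_measure (D k))" by simp
    also have "(\<Sum>k. emeasure area_measure (D k)) = emeasure area_measure (\<Union>k. D k)"
      using Db disjD by (intro suminf_emeasure) auto
    also have "emeasure area_measure (\<Union>k. D k) \<le> emeasure area_measure {z. Lambda f z > t}"
      using DL Lambda_set_borel[OF assms(6)] by (intro emeasure_mono) auto
    finally show ?thesis by (simp add: mult_left_mono)
  qed
  thus ?thesis unfolding E_def K_def .
qed


end
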